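(* Let $\mathbb{O}(P)$ be the limit of order ideals associated with an inverse system $\langle\{P_n\},\{p^n_k\}_{k<n}\rangle$ of nonempty finite posets with quotient maps. Then $\mathbb{O}(P)$ is $\sigma$-complete: every countable subset of $\mathbb{O}(P)$ has a supremum and an infimum in $\mathbb{O}(P)$.
   Context: A quotient map between posets is a surjective order-preserving map $\phi:A\to B$ such that for all $a\le b$ in $B$ there are $x\le y$ in $A$ with $\phi(x)=a,\phi(y)=b$. The inverse system: nonempty finite posets $P_n$, quotient maps $p^m_k:P_m\to P_k$ ($k<m$) with $p^k_l\circ p^m_k=p^m_l$. $\mathcal{O}(P_n)$ is the set of down-sets of $P_n$ under inclusion; for a quotient map $p:Q\to R$ of finite posets, $\hat p(\emptyset)=\emptyset$ and $\hat p(A)=\bigcup_i\downarrow p(a_i)$ over the maximal elements $a_i$ of $A$, where $\downarrow x=\{m:m\le x\}$. $\mathbb{O}(P):=\{(A_n)\in\prod_n\mathcal{O}(P_n):\widehat{p^{n+1}_n}(A_{n+1})=A_n\ \forall n\}$, ordered coordinatewise by inclusion. *)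

theory Defs
  imports Main "HOL-Library.Countable_Set"
begin

definition poset_on :: "'a set \<Rightarrow> ('a \<Rightarrow> 'a \<Rightarrow> bool) \<Rightarrow> bool" where
  "poset_on X le \<longleftrightarrow>
     (\<forall>x\<in>X. le x x) \<and>
     (\<forall>x\<in>X. \<forall>y\<in>X. le x y \<and> le y x \<longrightarrow> x = y) \<and>
     (\<forall>x\<in>X. \<forall>y\<in>X. \<forall>z\<in>X. le x y \<and> le y z \<longrightarrow> le x z)"

definition quotient_map ::
  "'a set \<Rightarrow> ('a \<Rightarrow> 'a \<Rightarrow> bool) \<Rightarrow> 'b set \<Rightarrow> ('b \<Rightarrow> 'b \<Rightarrow> bool) \<Rightarrow> ('a \<Rightarrow> 'b) \<Rightarrow> bool" where
  "quotient_map A leA B leB f \<longleftrightarrow>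
     f ` A = B \<and>
     (\<forall>x\<in>A. \<forall>y\<in>A. leA x y \<longrightarrow> leB (f x) (f y)) \<and>
     (\<forall>a\<in>B. \<forall>b\<in>B. leB a b \<longrightarrow> (\<exists>x\<in>A. \<exists>y\<in>A. leA x y \<and> f x = a \<and> f y = b))"

definition down_sets :: "'a set \<Rightarrow> ('a \<Rightarrow> 'a \<Rightarrow> bool) \<Rightarrow> 'a set set" where
  "down_sets X le = {A. A \<subseteq> X \<and> (\<forall>a\<in>A. \<forall>b\<in>X. le b a \<longrightarrow> b \<in> A)}"

definition down_of :: "'a set \<Rightarrow> ('a \<Rightarrow> 'a \<Rightarrow> bool) \<Rightarrow> 'a \<Rightarrow> 'a set" where
  "down_of X le x = {m \<in> X. le m x}"

definition maximal_elems :: "('a \<Rightarrow> 'a \<Rightarrow> bool) \<Rightarrow> 'a set \<Rightarrow> 'a set" where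
  "maximal_elems le A = {a \<in> A. \<forall>b\<in>A. le a b \<longrightarrow> b = a}"

definition hat_map :: "('a \<Rightarrow> 'a \<Rightarrow> bool) \<Rightarrow> 'b set \<Rightarrow> ('b \<Rightarrow> 'b \<Rightarrow> bool) \<Rightarrow> ('a \<Rightarrow> 'b) \<Rightarrow> 'a set \<Rightarrow> 'b set" where
  "hat_map leQ R leR p A =
     (if A = {} then {} else (\<Union>a\<in>maximal_elems leQ A. down_of R leR (p a)))"

definition inverse_system ::
  "(nat \<Rightarrow> 'a set) \<Rightarrow> (nat \<Rightarrow> 'a \<Rightarrow> 'a \<Rightarrow> bool) \<Rightarrow> (nat \<Rightarrow> nat \<Rightarrow> 'a \<Rightarrow> 'a) \<Rightarrow> bool" where
  "inverse_system P le p \<longleftrightarrow>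
     (\<forall>n. finite (P n) \<and> P n \<noteq> {} \<and> poset_on (P n) (le n)) \<and>
     (\<forall>k m. k < m \<longrightarrow> quotient_map (P m) (le m) (P k) (le k) (p m k)) \<and>
     (\<forall>l k m. l < k \<longrightarrow> k < m \<longrightarrow> (\<forall>x\<in>P m. p k l (p m k x) = p m l x))"

text \<open>The limit \<open>\<bbbO>(P)\<close>; ordered coordinatewise by inclusion, i.e. the
  pointwise order \<open>\<le>\<close> on \<open>nat \<Rightarrow> 'a set\<close>.\<close>

definition limit_ideals :: "(nat \<Rightarrow> 'a set) \<Rightarrow> (nat \<Rightarrow> 'a \<Rightarrow> 'a \<Rightarrow> bool) \<Rightarrow> (nat \<Rightarrow> nat \<Rightarrow> 'a \<Rightarrow> 'a) \<Rightarrow> (nat \<Rightarrow> 'a set) set" where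
  "limit_ideals P le p = {A. (\<forall>n. A n \<in> down_sets (P n) (le n)) \<and>
                   (\<forall>n. hat_map (le (Suc n)) (P n) (le n) (p (Suc n) n) (A (Suc n)) = A n)}"

definition is_sup_in :: "'b::order set \<Rightarrow> 'b set \<Rightarrow> 'b \<Rightarrow> bool" where
  "is_sup_in L S s \<longleftrightarrow> s \<in> L \<and> (\<forall>x\<in>S. x \<le> s) \<and> (\<forall>u\<in>L. (\<forall>x\<in>S. x \<le> u) \<longrightarrow> s \<le> u)"

definition is_inf_in :: "'b::order set \<Rightarrow> 'b set \<Rightarrow> 'b \<Rightarrow> bool" where
  "is_inf_in L S s \<longleftrightarrow> s \<in> L \<and> (\<forall>x\<in>S. s \<le> x) \<and> (\<forall>u\<in>L. (\<forall>x\<in>S. u \<le> x) \<longrightarrow> u \<le> s)"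

end

theory Submission
  imports Defs
begin

lemma max_above:
  assumes po: "poset_on X le" and fin: "finite X" and AX: "A \<subseteq> X" and a: "a \<in> A"
  shows "\<exists>b\<in>maximal_elems le A. le a b"
proof -
  define up where "up b = {c\<in>A. le b c}" for b
  obtain b where b: "b \<in> A \<and> le a b" and bmin: "\<forall>y. y \<in> A \<and> le a y \<longrightarrow> card (up b) \<le> card (up y)"
    using ex_has_least_nat[of "\<lambda>b. b \<in> A \<and> le a b" a "\<lambda>b. card (up b)"] a AX po
    unfolding poset_on_def by blast
  have finA: "finite A" using fin AX finite_subset by blast
  have "b \<in> maximal_elems le A"
    unfolding maximal_elems_def
  proof (intro CollectI conjI ballI impI)
    show "b \<in> A" using b by simp
    fix c assume c: "c \<in> A" "le b c"
    have sub: "up c \<subseteq> up b" unfolding up_def using po c b AX unfolding poset_on_def by blast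
    have "le a c" using po c b AX a unfolding poset_on_def by blast
    hence "card (up b) \<le> card (up c)" using bmin c by blast
    moreover have "finite (up b)" unfolding up_def using finA by simp
    ultimately have "up c = up b" using sub card_seteq by blast
    moreover have "b \<in> up b" unfolding up_def using b po AX unfolding poset_on_def by blast
    ultimately have "le c b" unfolding up_def by blast
    thus "c = b" using c po AX b unfolding poset_on_def by blast
  qed
  thus ?thesis using b by blast
qed

lemma hat_char:
  assumes sys: "inverse_system P le p" and A: "A \<in> down_sets (P (Suc n)) (le (Suc n))"
  shows "hat_map (le (Suc n)) (P n) (le n) (p (Suc n) n) A
       = {y \<in> P n. \<exists>a\<in>A. le n y (p (Suc n) n a)}"
proof (cases "A = {}")
  case True thus ?thesis by (simp add: hat_map_def)
next
  case False
  have po: "poset_on (P (Suc n)) (le (Suc n))" "finite (P (Suc n))" "poset_on (P n) (le n)"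
    using sys unfolding inverse_system_def by blast+
  have qm: "quotient_map (P (Suc n)) (le (Suc n)) (P n) (le n) (p (Suc n) n)"
    using sys unfolding inverse_system_def by blast
  have AX: "A \<subseteq> P (Suc n)" using A unfolding down_sets_def by blast
  show ?thesis
  proof
    show "hat_map (le (Suc n)) (P n) (le n) (p (Suc n) n) A \<subseteq> {y \<in> P n. \<exists>a\<in>A. le n y (p (Suc n) n a)}"
      using False unfolding hat_map_def down_of_def maximal_elems_def by auto
  next
    show "{y \<in> P n. \<exists>a\<in>A. le n y (p (Suc n) n a)} \<subseteq> hat_map (le (Suc n)) (P n) (le n) (p (Suc n) n) A"
    proof
      fix y assume "y \<in> {y \<in> P n. \<exists>a\<in>A. le n y (p (Suc n) n a)}"
      then obtain a where y: "y \<in> P n" "a \<in> A" "le n y (p (Suc n) n a)" by blast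
      obtain b where b: "b \<in> maximal_elems (le (Suc n)) A" "le (Suc n) a b"
        using max_above[OF po(1) po(2) AX y(2)] by blast
      have bA: "b \<in> A" using b unfolding maximal_elems_def by blast
      have "le n (p (Suc n) n a) (p (Suc n) n b)" using qm AX bA y(2) b(2)
        unfolding quotient_map_def by blast
      moreover have "p (Suc n) n a \<in> P n" "p (Suc n) n b \<in> P n" using qm AX bA y(2)
        unfolding quotient_map_def by blast+
      ultimately have "le n y (p (Suc n) n b)" using po(3) y unfolding poset_on_def by blast
      thus "y \<in> hat_map (le (Suc n)) (P n) (le n) (p (Suc n) n) A"
        using False b y unfolding hat_map_def down_of_def by auto
    qed
  qed
qed

lemma union_in:
  assumes sys: "inverse_system P le p" and F: "F \<subseteq> limit_ideals P le p"
  shows "(\<lambda>n. \<Union>C\<in>F. C n) \<in> limit_ideals P le p"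
proof -
  have ds: "\<And>n. (\<Union>C\<in>F. C n) \<in> down_sets (P n) (le n)"
    using F unfolding limit_ideals_def down_sets_def by blast
  have "hat_map (le (Suc n)) (P n) (le n) (p (Suc n) n) (\<Union>C\<in>F. C (Suc n)) = (\<Union>C\<in>F. C n)" for n
  proof -
    have "hat_map (le (Suc n)) (P n) (le n) (p (Suc n) n) (\<Union>C\<in>F. C (Suc n))
        = {y \<in> P n. \<exists>a\<in>(\<Union>C\<in>F. C (Suc n)). le n y (p (Suc n) n a)}"
      using hat_char[OF sys ds] by blast
    also have "\<dots> = (\<Union>C\<in>F. {y \<in> P n. \<exists>a\<in>C (Suc n). le n y (p (Suc n) n a)})" by blast
    also have "\<dots> = (\<Union>C\<in>F. hat_map (le (Suc n)) (P n) (le n) (p (Suc n) n) (C (Suc n)))"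
    proof (rule SUP_cong[OF refl])
      fix C assume "C \<in> F"
      hence "C (Suc n) \<in> down_sets (P (Suc n)) (le (Suc n))" using F unfolding limit_ideals_def by blast
      thus "{y \<in> P n. \<exists>a\<in>C (Suc n). le n y (p (Suc n) n a)} = hat_map (le (Suc n)) (P n) (le n) (p (Suc n) n) (C (Suc n))"
        using hat_char[OF sys] by metis
    qed
    also have "\<dots> = (\<Union>C\<in>F. C n)"
      using F unfolding limit_ideals_def by (intro SUP_cong[OF refl]) blast
    finally show ?thesis .
  qed
  thus ?thesis using ds unfolding limit_ideals_def by blast
qed

theorem mainTheorem16:
  fixes P :: "nat \<Rightarrow> 'a set" and le :: "nat \<Rightarrow> 'a \<Rightarrow> 'a \<Rightarrow> bool"
    and p :: "nat \<Rightarrow> nat \<Rightarrow> 'a \<Rightarrow> 'a"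
  assumes "inverse_system P le p"
  shows "\<forall>S. S \<subseteq> limit_ideals P le p \<and> countable S \<longrightarrow>
           (\<exists>s. is_sup_in (limit_ideals P le p) S s) \<and> (\<exists>i. is_inf_in (limit_ideals P le p) S i)"
proof (intro allI impI conjI)
  fix S assume S: "S \<subseteq> limit_ideals P le p \<and> countable S"
  let ?L = "limit_ideals P le p"
  show "\<exists>s. is_sup_in ?L S s"
  proof (intro exI)
    show "is_sup_in ?L S (\<lambda>n. \<Union>C\<in>S. C n)"
      unfolding is_sup_in_def
    proof (intro conjI ballI impI)
      show "(\<lambda>n. \<Union>C\<in>S. C n) \<in> ?L" using union_in[OF assms] S by blast
      fix x assume "x \<in> S"
      thus "x \<le> (\<lambda>n. \<Union>C\<in>S. C n)" by (auto simp: le_fun_def)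
    next
      fix u assume "u \<in> ?L" "\<forall>x\<in>S. x \<le> u"
      thus "(\<lambda>n. \<Union>C\<in>S. C n) \<le> u" by (auto simp: le_fun_def)
    qed
  qed
  let ?F = "{C\<in>?L. \<forall>x\<in>S. C \<le> x}"
  show "\<exists>i. is_inf_in ?L S i"
  proof (intro exI)
    show "is_inf_in ?L S (\<lambda>n. \<Union>C\<in>?F. C n)"
      unfolding is_inf_in_def
    proof (intro conjI ballI impI)
      show "(\<lambda>n. \<Union>C\<in>?F. C n) \<in> ?L" using union_in[OF assms, of ?F] by blast
      fix x assume "x \<in> S"
      thus "(\<lambda>n. \<Union>C\<in>?F. C n) \<le> x" by (auto simp: le_fun_def)
    next
      fix u assume "u \<in> ?L" "\<forall>x\<in>S. u \<le> x"
      thus "u \<le> (\<lambda>n. \<Union>C\<in>?F. C n)" by (auto simp: le_fun_def)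
    qed
  qed
qed

end
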